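(* Let $n,k$ be integers with $1<k<n-1$, let $\mathcal{P}_{k,n}=\{x\in[0,1]^n:\sum_{i=1}^nx_i=k\}$, let $\mathcal{F}$ be a strong Bernoulli factory for $\mathcal{P}_{k,n}$, and let $v$ be a vertex of $\mathcal{P}_{k,n}$. Then for every $T\ge0$ the polynomial $P_{v,T}(x)$ is divisible by $\prod_{i:v_i=1}x_i\prod_{i:v_i=0}(1-x_i)$.
   Context: A Bernoulli factory with output set $V$ (for inputs $x\in[0,1]^n$) is a (possibly infinite) rooted binary tree whose internal nodes are labeled by an index $i\in[n]$ or a known constant $c\in(0,1)$ and whose leaves are labeled by elements of $V$; on input $x$ one walks from the root, at a node labeled $i$ flipping a fresh independent coin that is $1$ with probability $x_i$, at a node labeled $c$ a fresh coin of bias $c$, following the edge labeled by the outcome, and outputs the label of the leaf reached; $\mathcal{F}(x)$ is the output and $T_{\mathcal{F}}(x)$ the depth of the leaf reached. For a polytope $\mathcal{P}$ with vertex set $V$, a strong Bernoulli factory for $\mathcal{P}$ is such a factory with output set $V$ that terminates almost surely and satisfies $\mathbb{E}[\mathcal{F}(x)]=x$ for all $x\in\mathcal{P}$. $P_{v,T}(x)=\Pr[\mathcal{F}(x)=v\wedge T_{\mathcal{F}}(x)\le T]$, regarded as the polynomial equal to the sum, over leaves labeled $v$ at depth at most $T$, of the product of the transition probabilities along the root-to-leaf path (each such product has the form $c\prod_ix_i^{a_i}(1-x_i)^{b_i}$ with $c\ge0$). *)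

theory Defs
  imports "HOL-Analysis.Analysis"
begin

datatype ('i, 'v) bnode = Coin 'i | Const real | Leaf 'v

definition is_leaf :: "('i, 'v) bnode \<Rightarrow> bool" where
  "is_leaf nd = (case nd of Leaf _ \<Rightarrow> True | _ \<Rightarrow> False)"

definition leaf_label :: "('i, 'v) bnode \<Rightarrow> 'v" where
  "leaf_label nd = (case nd of Leaf w \<Rightarrow> w | _ \<Rightarrow> undefined)"

text \<open>A (possibly infinite) rooted binary tree is given by a labelling of all finite
  bit strings (paths from the root; True = coin outcome 1).\<close>
type_synonym ('i, 'v) btree = "bool list \<Rightarrow> ('i, 'v) bnode"

definition reachable :: "('i, 'v) btree \<Rightarrow> bool list \<Rightarrow> bool" where
  "reachable t p \<longleftrightarrow> (\<forall>j < length p. \<not> is_leaf (t (take j p)))"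

definition leaves :: "('i, 'v) btree \<Rightarrow> bool list set" where
  "leaves t = {p. reachable t p \<and> is_leaf (t p)}"

definition step_prob :: "('n, 'v) btree \<Rightarrow> real ^ 'n \<Rightarrow> bool list \<Rightarrow> nat \<Rightarrow> real" where
  "step_prob t x p j = (case t (take j p) of
      Coin i \<Rightarrow> (if p ! j then x $ i else 1 - x $ i)
    | Const c \<Rightarrow> (if p ! j then c else 1 - c)
    | Leaf _ \<Rightarrow> 0)"

definition path_prob :: "('n, 'v) btree \<Rightarrow> real ^ 'n \<Rightarrow> bool list \<Rightarrow> real" where
  "path_prob t x p = (\<Prod>j < length p. step_prob t x p j)"

definition bernoulli_factory :: "'v set \<Rightarrow> ('n, 'v) btree \<Rightarrow> bool" where
  "bernoulli_factory V t \<longleftrightarrow>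
     (\<forall>p. reachable t p \<longrightarrow>
        (case t p of Coin _ \<Rightarrow> True | Const c \<Rightarrow> 0 < c \<and> c < 1 | Leaf w \<Rightarrow> w \<in> V))"

definition strong_bernoulli_factory :: "(real ^ 'n) set \<Rightarrow> ('n, real ^ 'n) btree \<Rightarrow> bool" where
  "strong_bernoulli_factory P t \<longleftrightarrow>
     bernoulli_factory {v. v extreme_point_of P} t \<and>
     (\<forall>x \<in> P. (path_prob t x has_sum 1) (leaves t) \<and>
              ((\<lambda>p. path_prob t x p *\<^sub>R leaf_label (t p)) has_sum x) (leaves t))"

definition PvT :: "('n, real ^ 'n) btree \<Rightarrow> real ^ 'n \<Rightarrow> nat \<Rightarrow> real ^ 'n \<Rightarrow> real" where
  "PvT t v T x = (\<Sum>p \<in> {p \<in> leaves t. length p \<le> T \<and> leaf_label (t p) = v}. path_prob t x p)"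

definition Pkn :: "nat \<Rightarrow> (real ^ 'n) set" where
  "Pkn k = {x. (\<forall>i. 0 \<le> x $ i \<and> x $ i \<le> 1) \<and> (\<Sum>i\<in>UNIV. x $ i) = real k}"

end

theory Submission
  imports Defs
begin

lemma reachable_take:
  assumes "reachable t p" "j \<le> length p"
  shows "reachable t (take j p)"
  using assms unfolding reachable_def by (auto simp: min_def)

lemma leaf_label_in:
  assumes "bernoulli_factory V t" "p \<in> leaves t"
  shows "leaf_label (t p) \<in> V"
proof -
  from assms(2) have r: "reachable t p" and l: "is_leaf (t p)" by (auto simp: leaves_def)
  from l obtain w where w: "t p = Leaf w" by (auto simp: is_leaf_def split: bnode.splits)
  from assms(1) r have "case t p of Coin _ \<Rightarrow> True | Const c \<Rightarrow> 0 < c \<and> c < 1 | Leaf w \<Rightarrow> w \<in> V"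
    by (auto simp: bernoulli_factory_def)
  with w show ?thesis by (simp add: leaf_label_def)
qed

lemma step_prob_pos:
  assumes "bernoulli_factory V t" "p \<in> leaves t" "j < length p"
    and "\<And>i'. t (take j p) = Coin i' \<Longrightarrow> (if p ! j then x $ i' else 1 - x $ i') > 0"
  shows "step_prob t x p j > 0"
proof -
  from assms(2) have r: "reachable t p" by (auto simp: leaves_def)
  then have nl: "\<not> is_leaf (t (take j p))" using assms(3) by (auto simp: reachable_def)
  have rj: "reachable t (take j p)" using reachable_take[OF r] assms(3) by simp
  from assms(1) rj have bf: "case t (take j p) of Coin _ \<Rightarrow> True | Const c \<Rightarrow> 0 < c \<and> c < 1 | Leaf w \<Rightarrow> w \<in> V"
    by (auto simp: bernoulli_factory_def)
  show ?thesis
  proof (cases "t (take j p)")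
    case (Coin i') then show ?thesis using assms(4)[OF Coin] by (simp add: step_prob_def)
  next
    case (Const c) then show ?thesis using bf by (simp add: step_prob_def)
  next
    case (Leaf w) then show ?thesis using nl by (simp add: is_leaf_def)
  qed
qed

lemma step_prob_nonneg:
  assumes "bernoulli_factory V t" "p \<in> leaves t" "j < length p"
    and "\<And>i. 0 \<le> x $ i \<and> x $ i \<le> 1"
  shows "step_prob t x p j \<ge> 0"
proof -
  from assms(2) have r: "reachable t p" by (auto simp: leaves_def)
  have rj: "reachable t (take j p)" using reachable_take[OF r] assms(3) by simp
  from assms(1) rj have bf: "case t (take j p) of Coin _ \<Rightarrow> True | Const c \<Rightarrow> 0 < c \<and> c < 1 | Leaf w \<Rightarrow> w \<in> V"
    by (auto simp: bernoulli_factory_def)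
  show ?thesis
  proof (cases "t (take j p)")
    case (Coin i') then show ?thesis using assms(4)[of i'] by (simp add: step_prob_def)
  next
    case (Const c) then show ?thesis using bf by (simp add: step_prob_def)
  next
    case (Leaf w) then show ?thesis by (simp add: step_prob_def)
  qed
qed

lemma path_prob_nonneg:
  assumes "bernoulli_factory V t" "p \<in> leaves t"
    and "\<And>i. 0 \<le> x $ i \<and> x $ i \<le> 1"
  shows "path_prob t x p \<ge> 0"
  unfolding path_prob_def using step_prob_nonneg[OF assms(1,2) _ assms(3)]
  by (intro prod_nonneg) auto

lemma path_prob_pos:
  assumes "bernoulli_factory V t" "p \<in> leaves t"
    and "\<And>j i'. j < length p \<Longrightarrow> t (take j p) = Coin i' \<Longrightarrow> (if p ! j then x $ i' else 1 - x $ i') > 0"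
  shows "path_prob t x p > 0"
  unfolding path_prob_def using step_prob_pos[OF assms(1,2)] assms(3)
  by (intro prod_pos) auto

lemma has_sum_zero_le:
  fixes g :: "'a \<Rightarrow> real"
  assumes "(g has_sum 0) A" "\<And>q. q \<in> A \<Longrightarrow> g q \<ge> 0" "p \<in> A"
  shows "g p \<le> 0"
proof -
  have "(g has_sum g p) {p}" using has_sum_finite[of "{p}" g] by simp
  from has_sum_mono_neutral[OF this assms(1)] show ?thesis using assms(2,3) by auto
qed


lemma exists_coin:
  fixes t :: "('n::finite, real ^ 'n) btree" and k :: nat and v :: "real ^ 'n"
  assumes k1: "1 < k" and kn: "k + 1 < CARD('n)"
    and sbf: "strong_bernoulli_factory (Pkn k) t"
    and p: "p \<in> leaves t" and lab: "leaf_label (t p) = v"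
    and vi: "v $ i = 1 \<or> v $ i = 0"
  shows "\<exists>j < length p. t (take j p) = Coin i \<and> p ! j = (v $ i = 1)"
proof (rule ccontr)
  assume nex: "\<not> ?thesis"
  define b :: bool where "b = (v $ i = 1)"
  define n where "n = CARD('n)"
  define c :: real where "c = (if b then real k / (real n - 1) else (real k - 1) / (real n - 1))"
  define x :: "real ^ 'n" where "x = (\<chi> j. if j = i then (if b then 0 else 1) else c)"
  have n1: "real n - 1 > 0" using kn k1 unfolding n_def by linarith
  have c01: "0 < c \<and> c < 1"
    using k1 kn n1 unfolding c_def n_def by (auto simp: field_simps)
  have bfac: "bernoulli_factory {v. v extreme_point_of Pkn k} t"
    and hs1: "\<And>y. y \<in> Pkn k \<Longrightarrow> (path_prob t y has_sum 1) (leaves t)"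
    and hs2: "\<And>y. y \<in> Pkn k \<Longrightarrow> ((\<lambda>p. path_prob t y p *\<^sub>R leaf_label (t p)) has_sum y) (leaves t)"
    using sbf unfolding strong_bernoulli_factory_def by auto
  have labin: "\<And>q. q \<in> leaves t \<Longrightarrow> leaf_label (t q) \<in> Pkn k"
    using leaf_label_in[OF bfac] by (auto simp: extreme_point_of_def)
  have x01: "\<And>j. 0 \<le> x $ j \<and> x $ j \<le> 1" using c01 unfolding x_def by auto
  have "(\<Sum>j\<in>UNIV. x $ j) = x $ i + (\<Sum>j\<in>UNIV - {i}. x $ j)"
    by (simp add: sum.remove)
  also have "(\<Sum>j\<in>UNIV - {i}. x $ j) = (\<Sum>j\<in>UNIV - {i}. c)"
    by (rule sum.cong) (auto simp: x_def)
  also have "\<dots> = (real n - 1) * c" by (simp add: n_def card_Diff_singleton of_nat_diff)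
  also have "x $ i + (real n - 1) * c = real k"
    using n1 unfolding c_def x_def by (auto simp: field_simps)
  finally have "(\<Sum>j\<in>UNIV. x $ j) = real k" .
  then have xP: "x \<in> Pkn k" using x01 unfolding Pkn_def by auto
  have pos: "path_prob t x p > 0"
  proof (rule path_prob_pos[OF bfac p])
    fix j i' assume j: "j < length p" and ti: "t (take j p) = Coin i'"
    show "(if p ! j then x $ i' else 1 - x $ i') > 0"
    proof (cases "i' = i")
      case True
      then have "p ! j \<noteq> b" using nex j ti unfolding b_def by auto
      then show ?thesis using True by (cases b) (auto simp: x_def)
    next
      case False then show ?thesis using c01 by (auto simp: x_def)
    qed
  qed
  have hsi: "((\<lambda>q. path_prob t x q * leaf_label (t q) $ i) has_sum x $ i) (leaves t)"
    using has_sum_bounded_linear[OF bounded_linear_vec_nth[of i] hs2[OF xP]] by simp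
  show False
  proof (cases b)
    case True
    then have "x $ i = 0" by (simp add: x_def)
    with hsi have h0: "((\<lambda>q. path_prob t x q * leaf_label (t q) $ i) has_sum 0) (leaves t)" by simp
    have "path_prob t x p * leaf_label (t p) $ i \<le> 0"
    proof (rule has_sum_zero_le[OF h0 _ p])
      fix q assume q: "q \<in> leaves t"
      show "0 \<le> path_prob t x q * leaf_label (t q) $ i"
        using path_prob_nonneg[OF bfac q x01] labin[OF q] unfolding Pkn_def by auto
    qed
    then show False using pos lab True unfolding b_def by simp
  next
    case False
    then have "x $ i = 1" by (simp add: x_def)
    have h0: "((\<lambda>q. path_prob t x q + - (path_prob t x q * leaf_label (t q) $ i)) has_sum 0) (leaves t)"
      using has_sum_add[OF hs1[OF xP] has_sum_bounded_linear[OF bounded_linear_minus[OF bounded_linear_ident] hsi]]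
        \<open>x $ i = 1\<close> by simp
    have "path_prob t x p + - (path_prob t x p * leaf_label (t p) $ i) \<le> 0"
    proof (rule has_sum_zero_le[OF h0 _ p])
      fix q assume q: "q \<in> leaves t"
      have "0 \<le> path_prob t x q * (1 - leaf_label (t q) $ i)"
        using path_prob_nonneg[OF bfac q x01] labin[OF q] unfolding Pkn_def by auto
      then show "0 \<le> path_prob t x q + - (path_prob t x q * leaf_label (t q) $ i)"
        by (simp add: algebra_simps)
    qed
    then show False using pos lab False vi unfolding b_def by simp
  qed
qed


lemma step_prob_poly: "real_polynomial_function (\<lambda>x. step_prob t x p j)"
proof (cases "t (take j p)")
  case (Coin i)
  have l: "real_polynomial_function (\<lambda>x::real^'a. x $ i)"
    unfolding real_polynomial_function_eq by (rule polynomial_function_bounded_linear) (rule bounded_linear_vec_nth)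
  show ?thesis
  proof (cases "p ! j")
    case True then show ?thesis using Coin l by (simp add: step_prob_def)
  next
    case False then show ?thesis using Coin l by (auto simp: step_prob_def)
  qed
qed (auto simp: step_prob_def)

theorem lemma7p4:
  fixes t :: "('n::finite, real ^ 'n) btree" and k :: nat and v :: "real ^ 'n" and T :: nat
  assumes "1 < k" and "k + 1 < CARD('n)"
    and "strong_bernoulli_factory (Pkn k) t"
    and "v extreme_point_of (Pkn k :: (real ^ 'n) set)"
  shows "\<exists>Q :: real ^ 'n \<Rightarrow> real. polynomial_function Q \<and>
           (\<forall>x. PvT t v T x =
                (\<Prod>i \<in> {i. v $ i = 1}. x $ i) * (\<Prod>i \<in> {i. v $ i = 0}. 1 - x $ i) * Q x)"
proof -
  define A where "A = {i. v $ i = 1}"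
  define B where "B = {i. v $ i = 0}"
  define C where "C = A \<union> B"
  define S where "S = {p \<in> leaves t. length p \<le> T \<and> leaf_label (t p) = v}"
  define f where "f p i = (SOME j. j < length p \<and> t (take j p) = Coin i \<and> p ! j = (v $ i = 1))" for p i
  define R where "R p x = prod (step_prob t x p) ({..<length p} - f p ` C)" for p x
  define Q where "Q x = (\<Sum>p\<in>S. R p x)" for x
  have finS: "finite S"
  proof (rule finite_subset)
    show "S \<subseteq> {xs. set xs \<subseteq> (UNIV::bool set) \<and> length xs \<le> T}" unfolding S_def by auto
  qed (rule finite_lists_length_le, simp)
  have fp: "f p i < length p \<and> t (take (f p i) p) = Coin i \<and> p ! (f p i) = (v $ i = 1)"
    if p: "p \<in> S" and i: "i \<in> C" for p i
  proof -
    have "\<exists>j < length p. t (take j p) = Coin i \<and> p ! j = (v $ i = 1)"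
      using exists_coin[OF assms(1-3), of p v i] p i unfolding S_def C_def A_def B_def by auto
    from someI_ex[OF this] show ?thesis unfolding f_def .
  qed
  have fact: "path_prob t x p = (\<Prod>i\<in>A. x $ i) * (\<Prod>i\<in>B. 1 - x $ i) * R p x"
    if p: "p \<in> S" for p x
  proof -
    have inj: "inj_on (f p) C"
    proof (rule inj_onI)
      fix i i'
      assume ii: "i \<in> C" "i' \<in> C" "f p i = f p i'"
      have "Coin i = t (take (f p i) p)" using conjunct1[OF conjunct2[OF fp[OF p ii(1)]]] by simp
      also have "\<dots> = t (take (f p i') p)" using ii(3) by simp
      also have "\<dots> = Coin i'" using conjunct1[OF conjunct2[OF fp[OF p ii(2)]]] by simp
      finally show "i = i'" by simp
    qed
    have sub: "f p ` C \<subseteq> {..<length p}"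
    proof
      fix j assume "j \<in> f p ` C"
      then obtain i where "i \<in> C" "j = f p i" by blast
      then show "j \<in> {..<length p}" using conjunct1[OF fp[OF p \<open>i \<in> C\<close>]] by simp
    qed
    have "path_prob t x p = prod (step_prob t x p) ({..<length p} - f p ` C) * prod (step_prob t x p) (f p ` C)"
      unfolding path_prob_def by (rule prod.subset_diff[OF sub]) simp
    also have "prod (step_prob t x p) (f p ` C) = (\<Prod>i\<in>C. step_prob t x p (f p i))"
      using prod.reindex[OF inj, of "step_prob t x p"] by (simp add: o_def)
    also have "\<dots> = (\<Prod>i\<in>C. if v $ i = 1 then x $ i else 1 - x $ i)"
    proof (rule prod.cong)
      fix i assume iC: "i \<in> C"
      have h1: "t (take (f p i) p) = Coin i" using conjunct1[OF conjunct2[OF fp[OF p iC]]] .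
      have h2: "p ! (f p i) = (v $ i = 1)" using conjunct2[OF conjunct2[OF fp[OF p iC]]] .
      show "step_prob t x p (f p i) = (if v $ i = 1 then x $ i else 1 - x $ i)"
        unfolding step_prob_def h1 h2 by simp
    qed simp
    also have "\<dots> = (\<Prod>i\<in>A. if v $ i = 1 then x $ i else 1 - x $ i) * (\<Prod>i\<in>B. if v $ i = 1 then x $ i else 1 - x $ i)"
      unfolding C_def by (rule prod.union_disjoint) (auto simp: A_def B_def)
    also have "\<dots> = (\<Prod>i\<in>A. x $ i) * (\<Prod>i\<in>B. 1 - x $ i)"
    proof -
      have "(\<Prod>i\<in>A. if v $ i = 1 then x $ i else 1 - x $ i) = (\<Prod>i\<in>A. x $ i)"
        by (rule prod.cong) (simp_all add: A_def)
      moreover have "(\<Prod>i\<in>B. if v $ i = 1 then x $ i else 1 - x $ i) = (\<Prod>i\<in>B. 1 - x $ i)"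
        by (rule prod.cong) (simp_all add: B_def)
      ultimately show ?thesis by simp
    qed
    finally show ?thesis unfolding R_def by (simp add: mult_ac)
  qed
  show ?thesis
  proof (intro exI conjI allI)
    show "polynomial_function Q"
      unfolding real_polynomial_function_eq[symmetric] Q_def R_def
      using finS by (intro real_polynomial_function_sum real_polynomial_function_prod step_prob_poly) auto
  next
    fix x
    have "PvT t v T x = (\<Sum>p\<in>S. (\<Prod>i\<in>A. x $ i) * (\<Prod>i\<in>B. 1 - x $ i) * R p x)"
      unfolding PvT_def S_def[symmetric] by (rule sum.cong) (auto simp: fact)
    also have "\<dots> = (\<Prod>i\<in>A. x $ i) * (\<Prod>i\<in>B. 1 - x $ i) * Q x"
      unfolding Q_def by (simp add: sum_distrib_left)
    finally show "PvT t v T x = (\<Prod>i \<in> {i. v $ i = 1}. x $ i) * (\<Prod>i \<in> {i. v $ i = 0}. 1 - x $ i) * Q x"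
      unfolding A_def B_def .
  qed
qed

end
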